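(* Let $G$ be a finite group, $H\leq G$, $x\in G$ and $h\in H$. If $hS_xh^{-1}=S_x$, then $h\in H_x$. In particular, if $hS_xh^{-1}\cap S_x\neq\varnothing$ then $h\in H_x$.
   Context: For $x\in G$, $H_x=\bigcap_{i\in\mathbb{Z}}x^iHx^{-i}$ and $S_x=H_x\cdot x\subseteq G$. *)

theory Defs
  imports "HOL-Algebra.Algebra"
begin

definition Hx :: "('a, 'b) monoid_scheme \<Rightarrow> 'a set \<Rightarrow> 'a \<Rightarrow> 'a set" where
  "Hx G H x = (\<Inter>i::int. r_coset G (l_coset G (x [^]\<^bsub>G\<^esub> i) H) (inv\<^bsub>G\<^esub> (x [^]\<^bsub>G\<^esub> i)))"

definition Sx :: "('a, 'b) monoid_scheme \<Rightarrow> 'a set \<Rightarrow> 'a \<Rightarrow> 'a set" where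
  "Sx G H x = r_coset G (Hx G H x) x"

end

theory Submission
  imports Defs
begin

context group
begin

lemma canc1 [simp]: "x \<in> carrier G \<Longrightarrow> y \<in> carrier G \<Longrightarrow> inv x \<otimes> (x \<otimes> y) = y"
  by (simp add: m_assoc[symmetric])

lemma canc2 [simp]: "x \<in> carrier G \<Longrightarrow> y \<in> carrier G \<Longrightarrow> x \<otimes> (inv x \<otimes> y) = y"
  by (simp add: m_assoc[symmetric])

definition cj :: "'a \<Rightarrow> int \<Rightarrow> 'a \<Rightarrow> 'a" where
  "cj x i g = x [^] i \<otimes> g \<otimes> inv (x [^] i)"

lemma cj_closed: "x \<in> carrier G \<Longrightarrow> g \<in> carrier G \<Longrightarrow> cj x i g \<in> carrier G"
  unfolding cj_def by simp

lemma cj_cj: assumes "x \<in> carrier G" "g \<in> carrier G"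
  shows "cj x i (cj x j g) = cj x (i + j) g"
  using assms unfolding cj_def
  by (simp add: int_pow_mult inv_mult_group m_assoc)

lemma cj_0: "g \<in> carrier G \<Longrightarrow> x \<in> carrier G \<Longrightarrow> cj x 0 g = g"
  unfolding cj_def by simp

lemma cj_mult: assumes "x \<in> carrier G" "a \<in> carrier G" "b \<in> carrier G"
  shows "cj x i (a \<otimes> b) = cj x i a \<otimes> cj x i b"
  using assms unfolding cj_def
  by (simp add: m_assoc)

lemma cj_inv: assumes "x \<in> carrier G" "a \<in> carrier G"
  shows "cj x i (inv a) = inv (cj x i a)"
  using assms unfolding cj_def
  by (simp add: inv_mult_group m_assoc)

lemma Hx_unf: "g \<in> Hx G H x \<longleftrightarrow> (\<forall>i::int. \<exists>k\<in>H. g = x [^] i \<otimes> k \<otimes> inv (x [^] i))"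
  unfolding Hx_def r_coset_def l_coset_def by auto

lemma Hx_mem:
  assumes "subgroup H G" "x \<in> carrier G"
  shows "g \<in> Hx G H x \<longleftrightarrow> g \<in> carrier G \<and> (\<forall>i. cj x i g \<in> H)"
proof
  assume g: "g \<in> Hx G H x"
  have gi: "\<exists>k\<in>H. g = x [^] i \<otimes> k \<otimes> inv (x [^] i)" for i :: int
    using g unfolding Hx_unf by blast
  obtain k0 where k0: "k0 \<in> H" "g = x [^] (0::int) \<otimes> k0 \<otimes> inv (x [^] (0::int))" using gi by blast
  have k0c: "k0 \<in> carrier G" using k0(1) assms(1) subgroup.subset by blast
  have gc: "g \<in> carrier G" using k0(2) k0c by simp
  moreover have "cj x i g \<in> H" for i :: int
  proof -
    obtain k where k: "k \<in> H" "g = x [^] (-i) \<otimes> k \<otimes> inv (x [^] (-i))" using gi by blast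
    have kc: "k \<in> carrier G" using k(1) assms(1) subgroup.subset by blast
    have "g = cj x (-i) k" using k(2) unfolding cj_def .
    then have "cj x i g = cj x 0 k" using cj_cj[OF assms(2) kc, of i "-i"] by simp
    then show ?thesis using cj_0[OF kc assms(2)] k(1) by simp
  qed
  ultimately show "g \<in> carrier G \<and> (\<forall>i. cj x i g \<in> H)" by blast
next
  assume g: "g \<in> carrier G \<and> (\<forall>i. cj x i g \<in> H)"
  show "g \<in> Hx G H x"
    unfolding Hx_unf
  proof
    fix i :: int
    have "cj x (-i) g \<in> H" using g by blast
    moreover have "cj x i (cj x (-i) g) = g"
      using cj_cj[OF assms(2), of g i "-i"] g cj_0[of g x] assms by simp
    then have "g = x [^] i \<otimes> cj x (-i) g \<otimes> inv (x [^] i)"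
      unfolding cj_def[of x i] by simp
    ultimately show "\<exists>k\<in>H. g = x [^] i \<otimes> k \<otimes> inv (x [^] i)" by blast
  qed
qed

lemma Hx_sub: assumes "subgroup H G" "x \<in> carrier G" "k \<in> Hx G H x"
  shows "k \<in> H"
proof -
  have "k \<in> carrier G" "cj x 0 k \<in> H" using Hx_mem[OF assms(1,2)] assms(3) by blast+
  then show ?thesis using cj_0[of k x] assms(2) by simp
qed

lemma Hx_cj: assumes "subgroup H G" "x \<in> carrier G" "k \<in> Hx G H x"
  shows "cj x j k \<in> H"
  using Hx_mem[OF assms(1,2)] assms(3) by blast

lemma Hx_carrier: assumes "subgroup H G" "x \<in> carrier G" "k \<in> Hx G H x"
  shows "k \<in> carrier G"
  using Hx_mem[OF assms(1,2)] assms(3) by blast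

lemma one_Hx: assumes "subgroup H G" "x \<in> carrier G"
  shows "\<one> \<in> Hx G H x"
  using Hx_mem[OF assms] assms unfolding cj_def by (simp add: subgroup.one_closed)

lemma iter:
  assumes H: "subgroup H G" and x: "x \<in> carrier G" and h: "h \<in> H"
    and a: "a \<in> Hx G H x" and b: "b \<in> Hx G H x"
    and eq: "cj x e h = a \<otimes> h \<otimes> b"
  shows "cj x (e * int n) h \<in> H"
proof (induction n)
  case 0
  then show ?case using cj_0 h H x subgroup.subset by fastforce
next
  case (Suc n)
  have hc: "h \<in> carrier G" using h H subgroup.subset by blast
  have ac: "a \<in> carrier G" and bc: "b \<in> carrier G" using Hx_carrier H x a b by auto
  have "cj x (e * int (Suc n)) h = cj x (e * int n) (cj x e h)"
    using cj_cj[OF x hc] by (simp add: algebra_simps)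
  also have "\<dots> = cj x (e * int n) a \<otimes> cj x (e * int n) h \<otimes> cj x (e * int n) b"
    using eq cj_mult x hc ac bc by simp
  finally show ?case
    using Suc Hx_cj[OF H x a] Hx_cj[OF H x b] H by (simp add: subgroup.m_closed)
qed

end

lemma (in group) rc_mem: "z \<in> A #> a \<longleftrightarrow> (\<exists>k\<in>A. z = k \<otimes> a)"
  unfolding r_coset_def by blast

lemma (in group) lc_mem: "z \<in> a <# A \<longleftrightarrow> (\<exists>k\<in>A. z = a \<otimes> k)"
  unfolding l_coset_def by blast

lemma (in group) c1_lemma:
  assumes hc: "h \<in> carrier G" and k1c: "k1 \<in> carrier G" and k2c: "k2 \<in> carrier G" and x: "x \<in> carrier G"
    and eq: "h \<otimes> (k1 \<otimes> x) \<otimes> inv h = k2 \<otimes> x"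
  shows "cj x 1 h = inv k2 \<otimes> h \<otimes> k1"
proof -
  have e1: "inv k2 \<otimes> (h \<otimes> (k1 \<otimes> x) \<otimes> inv h) \<otimes> h = inv k2 \<otimes> (k2 \<otimes> x) \<otimes> h" using eq by simp
  have e2: "inv k2 \<otimes> (h \<otimes> (k1 \<otimes> x) \<otimes> inv h) \<otimes> h = inv k2 \<otimes> h \<otimes> k1 \<otimes> x"
    using hc k1c k2c x by (simp add: m_assoc)
  have e3: "inv k2 \<otimes> (k2 \<otimes> x) \<otimes> h = x \<otimes> h"
    using hc k1c k2c x by (simp add: m_assoc)
  have "inv k2 \<otimes> h \<otimes> k1 \<otimes> x = x \<otimes> h" using e1 e2 e3 by simp
  then have "inv k2 \<otimes> h \<otimes> k1 \<otimes> x \<otimes> inv x = x \<otimes> h \<otimes> inv x" by simp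
  then show ?thesis unfolding cj_def using assms by (simp add: m_assoc)
qed

lemma (in group) cm1_lemma:
  assumes hc: "h \<in> carrier G" and ac: "a \<in> carrier G" and bc: "b \<in> carrier G" and x: "x \<in> carrier G"
    and eq: "h = a \<otimes> c \<otimes> b" and cc: "c \<in> carrier G"
  shows "c = inv a \<otimes> h \<otimes> inv b"
  using assms by (simp add: m_assoc)

theorem lemma4p4:
  fixes G (structure) and H :: "'a set" and x h :: 'a
  assumes "group G" and "finite (carrier G)" and "subgroup H G"
    and "x \<in> carrier G" and "h \<in> H"
  shows "(r_coset G (l_coset G h (Sx G H x)) (inv h) = Sx G H x \<longrightarrow> h \<in> Hx G H x)
       \<and> (r_coset G (l_coset G h (Sx G H x)) (inv h) \<inter> Sx G H x \<noteq> {} \<longrightarrow> h \<in> Hx G H x)"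
proof -
  interpret group G by fact
  note H = assms(3) and x = assms(4) and h = assms(5)
  have hc: "h \<in> carrier G" using h H subgroup.subset by blast
  have second: "h \<in> Hx G H x"
    if ne: "r_coset G (l_coset G h (Sx G H x)) (inv h) \<inter> Sx G H x \<noteq> {}"
  proof -
    obtain z where z1: "z \<in> r_coset G (l_coset G h (Sx G H x)) (inv h)" and z2: "z \<in> Sx G H x"
      using ne by blast
    obtain v where v: "v \<in> l_coset G h (Sx G H x)" "z = v \<otimes> inv h"
      using z1 unfolding rc_mem by blast
    obtain w where w0: "w \<in> Sx G H x" "v = h \<otimes> w"
      using v(1) unfolding lc_mem by blast
    have w: "w \<in> Sx G H x" "z = h \<otimes> w \<otimes> inv h" using w0 v(2) by auto
    obtain k1 where k1: "k1 \<in> Hx G H x" "w = k1 \<otimes> x" using w(1) unfolding Sx_def rc_mem by blast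
    obtain k2 where k2: "k2 \<in> Hx G H x" "z = k2 \<otimes> x" using z2 unfolding Sx_def rc_mem by blast
    have eq: "h \<otimes> (k1 \<otimes> x) \<otimes> inv h = k2 \<otimes> x" using w(2) k1(2) k2(2) by simp
    have k1c: "k1 \<in> carrier G" and k2c: "k2 \<in> carrier G" using Hx_carrier H x k1 k2 by auto
    have c1: "cj x 1 h = inv k2 \<otimes> h \<otimes> k1" by (rule c1_lemma[OF hc k1c k2c x eq])
    have HxK: "cj x j k \<in> Hx G H x" if "k \<in> Hx G H x" for k j
    proof -
      have kc: "k \<in> carrier G" using Hx_carrier[OF H x that] .
      have "cj x i (cj x j k) \<in> H" for i
        using cj_cj[OF x kc, of i j] Hx_cj[OF H x that, of "i + j"] by simp
      then show ?thesis using Hx_mem[OF H x] cj_closed[OF x kc] by blast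
    qed
    have HxI: "inv k \<in> Hx G H x" if "k \<in> Hx G H x" for k
    proof -
      have kc: "k \<in> carrier G" using Hx_carrier[OF H x that] .
      have "cj x i (inv k) \<in> H" for i
        using cj_inv[OF x kc, of i] Hx_cj[OF H x that, of i] subgroup.m_inv_closed[OF H] by simp
      then show ?thesis using Hx_mem[OF H x] kc by blast
    qed
    have a1: "inv (cj x (-1) (inv k2)) \<in> Hx G H x" using HxI HxK k2 by blast
    have b1: "inv (cj x (-1) k1) \<in> Hx G H x" using HxI HxK k1 by blast
    have cm1: "cj x (-1) h = inv (cj x (-1) (inv k2)) \<otimes> h \<otimes> inv (cj x (-1) k1)"
    proof -
      have "h = cj x (-1) (cj x 1 h)" using cj_cj[OF x hc, of "-1" 1] cj_0[OF hc x] by simp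
      also have "\<dots> = cj x (-1) (inv k2) \<otimes> cj x (-1) h \<otimes> cj x (-1) k1"
        using c1 cj_mult x hc k1c k2c by simp
      finally have "h = cj x (-1) (inv k2) \<otimes> cj x (-1) h \<otimes> cj x (-1) k1" .
      then show ?thesis
        by (rule cm1_lemma[OF hc cj_closed[OF x inv_closed[OF k2c]] cj_closed[OF x k1c] x _ cj_closed[OF x hc]])
    qed
    have pos: "cj x (1 * int n) h \<in> H" for n
      by (rule iter[OF H x h _ _ c1]) (auto intro: HxI k1 k2)
    have neg: "cj x (-1 * int n) h \<in> H" for n
      by (rule iter[OF H x h a1 b1 cm1])
    have "cj x i h \<in> H" for i
    proof (cases "i \<ge> 0")
      case True
      then show ?thesis using pos[of "nat i"] by simp
    next
      case False
      then show ?thesis using neg[of "nat (-i)"] by simp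
    qed
    then show ?thesis using Hx_mem[OF H x] hc by blast
  qed
  have "x \<in> Sx G H x" unfolding Sx_def rc_mem using one_Hx[OF H x] x by force
  then have "r_coset G (l_coset G h (Sx G H x)) (inv h) = Sx G H x
      \<Longrightarrow> r_coset G (l_coset G h (Sx G H x)) (inv h) \<inter> Sx G H x \<noteq> {}"
    by auto
  then show ?thesis using second by blast
qed

end
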